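(* Let $a_1,\dots,a_n\in\mathbb{F}$ and $r_1,\dots,r_n\in\mathbb{Z}_+$ be such that $\Omega=\{(x-a_1)^{r_1},\dots,(x-a_n)^{r_n}\}\subseteq\mathbb{F}[x;\sigma,\delta]$ has size $n$. (1) If $\Omega$ is P-independent, then so is $\{(x-a_1)^{s_1},\dots,(x-a_n)^{s_n}\}$ for all $s_1,\dots,s_n\in\mathbb{Z}_+$ with $s_i\le r_i$ for all $i$. (2) If $\Omega$ is P-independent, then the set $\{a_1,\dots,a_n\}\subseteq\mathbb{F}$ has size $n$ and is P-independent.
   Context: Let $\mathbb{F}$ be a division ring, $\sigma$ a ring endomorphism of $\mathbb{F}$ and $\delta$ a $\sigma$-derivation; $\mathbb{F}[x;\sigma,\delta]$ is the skew polynomial ring with $xa=\sigma(a)x+\delta(a)$ (a domain with right Euclidean division). For a set $\Omega$ of skew polynomials, $I(\Omega)$ is the left ideal of skew polynomials right-divisible by every element of $\Omega$, $F_\Omega$ its monic generator of minimal degree (or $0$ if $I(\Omega)=\{0\}$). $\Omega$ is P-independent if it is finite, $I(\Omega)\ne\{0\}$ and $\deg F_\Omega=\sum_{P\in\Omega}\deg P$. A finite set $\{b_1,\dots,b_k\}\subseteq\mathbb{F}$ of distinct elements is P-independent if $\{x-b_1,\dots,x-b_k\}$ is. *)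

theory Defs
  imports "HOL-Computational_Algebra.Polynomial"
begin

text \<open>Skew polynomials over a division ring, represented by their (left) coefficient
  sequences: a polynomial p stands for sum over i of (coeff p i) x^i, with coefficients
  on the left.  The multiplication is determined by x a = sigma(a) x + delta(a).\<close>

definition ring_endo :: "('a::division_ring \<Rightarrow> 'a) \<Rightarrow> bool" where
  "ring_endo \<sigma> \<longleftrightarrow> (\<forall>a b. \<sigma> (a + b) = \<sigma> a + \<sigma> b) \<and> (\<forall>a b. \<sigma> (a * b) = \<sigma> a * \<sigma> b) \<and> \<sigma> 1 = 1"

definition sigma_derivation :: "('a::division_ring \<Rightarrow> 'a) \<Rightarrow> ('a \<Rightarrow> 'a) \<Rightarrow> bool" where
  "sigma_derivation \<sigma> \<delta> \<longleftrightarrow> (\<forall>a b. \<delta> (a + b) = \<delta> a + \<delta> b) \<and>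
      (\<forall>a b. \<delta> (a * b) = \<sigma> a * \<delta> b + \<delta> a * b)"

definition skew_xmul :: "('a::division_ring \<Rightarrow> 'a) \<Rightarrow> ('a \<Rightarrow> 'a) \<Rightarrow> 'a poly \<Rightarrow> 'a poly" where
  "skew_xmul \<sigma> \<delta> p = pCons 0 (map_poly \<sigma> p) + map_poly \<delta> p"

definition lsmult :: "'a::division_ring \<Rightarrow> 'a poly \<Rightarrow> 'a poly" where
  "lsmult a p = map_poly (\<lambda>c. a * c) p"

definition skew_mult :: "('a::division_ring \<Rightarrow> 'a) \<Rightarrow> ('a \<Rightarrow> 'a) \<Rightarrow> 'a poly \<Rightarrow> 'a poly \<Rightarrow> 'a poly" where
  "skew_mult \<sigma> \<delta> p q = (\<Sum>i\<le>degree p. lsmult (coeff p i) ((skew_xmul \<sigma> \<delta> ^^ i) q))"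

definition skew_pow :: "('a::division_ring \<Rightarrow> 'a) \<Rightarrow> ('a \<Rightarrow> 'a) \<Rightarrow> 'a poly \<Rightarrow> nat \<Rightarrow> 'a poly" where
  "skew_pow \<sigma> \<delta> p n = ((\<lambda>q. skew_mult \<sigma> \<delta> q p) ^^ n) [:1:]"

definition skew_I :: "('a::division_ring \<Rightarrow> 'a) \<Rightarrow> ('a \<Rightarrow> 'a) \<Rightarrow> 'a poly set \<Rightarrow> 'a poly set" where
  "skew_I \<sigma> \<delta> \<Omega> = {F. \<forall>P\<in>\<Omega>. \<exists>G. F = skew_mult \<sigma> \<delta> G P}"

definition skew_F :: "('a::division_ring \<Rightarrow> 'a) \<Rightarrow> ('a \<Rightarrow> 'a) \<Rightarrow> 'a poly set \<Rightarrow> 'a poly" where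
  "skew_F \<sigma> \<delta> \<Omega> = (if skew_I \<sigma> \<delta> \<Omega> = {0} then 0 else
     (THE F. F \<in> skew_I \<sigma> \<delta> \<Omega> \<and> lead_coeff F = 1 \<and>
        (\<forall>G\<in>skew_I \<sigma> \<delta> \<Omega>. G \<noteq> 0 \<longrightarrow> degree F \<le> degree G)))"

definition P_independent :: "('a::division_ring \<Rightarrow> 'a) \<Rightarrow> ('a \<Rightarrow> 'a) \<Rightarrow> 'a poly set \<Rightarrow> bool" where
  "P_independent \<sigma> \<delta> \<Omega> \<longleftrightarrow> finite \<Omega> \<and> skew_I \<sigma> \<delta> \<Omega> \<noteq> {0} \<and>
     degree (skew_F \<sigma> \<delta> \<Omega>) = (\<Sum>P\<in>\<Omega>. degree P)"

definition P_independent_elems :: "('a::division_ring \<Rightarrow> 'a) \<Rightarrow> ('a \<Rightarrow> 'a) \<Rightarrow> 'a set \<Rightarrow> bool" where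
  "P_independent_elems \<sigma> \<delta> B \<longleftrightarrow> finite B \<and> P_independent \<sigma> \<delta> ((\<lambda>b. [:- b, 1:]) ` B)"

end

theory Submission
  imports Defs
begin


locale skew =
  fixes \<sigma> \<delta> :: "'a::division_ring \<Rightarrow> 'a"
  assumes endo: "ring_endo \<sigma>" and der: "sigma_derivation \<sigma> \<delta>"
begin

abbreviation X where "X \<equiv> skew_xmul \<sigma> \<delta>"
abbreviation sm (infixl "\<odot>" 70) where "p \<odot> q \<equiv> skew_mult \<sigma> \<delta> p q"

lemma s_add: "\<sigma> (a + b) = \<sigma> a + \<sigma> b" using endo by (simp add: ring_endo_def)
lemma s_mult: "\<sigma> (a * b) = \<sigma> a * \<sigma> b" using endo by (simp add: ring_endo_def)
lemma s_one[simp]: "\<sigma> 1 = 1" using endo by (simp add: ring_endo_def)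
lemma d_add: "\<delta> (a + b) = \<delta> a + \<delta> b" using der by (simp add: sigma_derivation_def)
lemma d_mult: "\<delta> (a * b) = \<sigma> a * \<delta> b + \<delta> a * b" using der by (simp add: sigma_derivation_def)
lemma s_zero[simp]: "\<sigma> 0 = 0" using s_add[of 0 0] by simp
lemma d_zero[simp]: "\<delta> 0 = 0" using d_add[of 0 0] by simp
lemma s_nz: "c \<noteq> 0 \<Longrightarrow> \<sigma> c \<noteq> 0"
proof
  assume "c \<noteq> 0" "\<sigma> c = 0"
  then have "\<sigma> c * \<sigma> (inverse c) = 0" by simp
  then have "\<sigma> (c * inverse c) = 0" by (simp only: s_mult)
  moreover have "c * inverse c = 1" using \<open>c \<noteq> 0\<close> by simp
  ultimately show False by simp
qed
lemma spow_nz: "c \<noteq> 0 \<Longrightarrow> (\<sigma>^^k) c \<noteq> 0"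
  by (induction k) (auto simp: s_nz)
lemma spow_one[simp]: "(\<sigma>^^k) 1 = 1"
  by (induction k) auto

lemma coeff_X: "coeff (X p) k = (if k = 0 then 0 else \<sigma> (coeff p (k - 1))) + \<delta> (coeff p k)"
  by (simp add: skew_xmul_def coeff_pCons coeff_map_poly split: nat.splits)

lemma coeff_lsmult[simp]: "coeff (lsmult c p) k = c * coeff p k"
  by (simp add: lsmult_def coeff_map_poly)

lemma lsmult_0[simp]: "lsmult 0 p = 0" by (simp add: poly_eq_iff)
lemma lsmult_0r[simp]: "lsmult c 0 = 0" by (simp add: poly_eq_iff)
lemma lsmult_1[simp]: "lsmult 1 p = p" by (simp add: poly_eq_iff)
lemma lsmult_add: "lsmult c (p + q) = lsmult c p + lsmult c q" by (simp add: poly_eq_iff algebra_simps)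
lemma lsmult_add2: "lsmult (c + d) p = lsmult c p + lsmult d p" by (simp add: poly_eq_iff algebra_simps)
lemma lsmult_lsmult: "lsmult c (lsmult d p) = lsmult (c * d) p" by (simp add: poly_eq_iff algebra_simps)
lemma lsmult_pCons: "lsmult c (pCons a p) = pCons (c * a) (lsmult c p)"
  by (simp add: poly_eq_iff coeff_pCons split: nat.splits)
lemma lsmult_sum: "lsmult c (\<Sum>j\<in>J. f j) = (\<Sum>j\<in>J. lsmult c (f j))"
  by (simp add: poly_eq_iff coeff_sum sum_distrib_left)

lemma X_add: "X (p + q) = X p + X q"
  by (simp add: poly_eq_iff coeff_X s_add d_add algebra_simps)
lemma X_0[simp]: "X 0 = 0" by (simp add: poly_eq_iff coeff_X)
lemma Xpow_add: "(X^^i) (p + q) = (X^^i) p + (X^^i) q"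
  by (induction i) (auto simp: X_add)
lemma Xpow_0[simp]: "(X^^i) 0 = 0"
  by (induction i) auto
lemma X_lsmult: "X (lsmult c w) = lsmult (\<sigma> c) (X w) + lsmult (\<delta> c) w"
  by (simp add: poly_eq_iff coeff_X s_mult d_mult algebra_simps)
lemma X_pCons: "X (pCons b q) = pCons (\<delta> b) ([:\<sigma> b:] + X q)"
  by (simp add: poly_eq_iff coeff_X coeff_pCons split: nat.splits)

lemma sm_def2:
  assumes "degree p \<le> N"
  shows "p \<odot> q = (\<Sum>i\<le>N. lsmult (coeff p i) ((X^^i) q))"
proof -
  have "(\<Sum>i\<le>N. lsmult (coeff p i) ((X^^i) q)) = (\<Sum>i\<le>degree p. lsmult (coeff p i) ((X^^i) q))"
    using assms by (intro sum.mono_neutral_right) (auto simp: coeff_eq_0)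
  then show ?thesis by (simp add: skew_mult_def)
qed

lemma sm_0[simp]: "0 \<odot> q = 0" by (simp add: skew_mult_def)

lemma sm_pCons: "pCons a p \<odot> q = lsmult a q + p \<odot> X q"
proof -
  have "pCons a p \<odot> q = (\<Sum>i\<le>Suc (degree p). lsmult (coeff (pCons a p) i) ((X^^i) q))"
    by (rule sm_def2) simp
  also have "\<dots> = lsmult a q + (\<Sum>i\<le>degree p. lsmult (coeff p i) ((X^^Suc i) q))"
    by (subst sum.atMost_Suc_shift) simp
  also have "(\<Sum>i\<le>degree p. lsmult (coeff p i) ((X^^Suc i) q)) = p \<odot> X q"
    by (simp add: skew_mult_def funpow_Suc_right del: funpow.simps)
  finally show ?thesis .
qed

lemma sm_const: "[:c:] \<odot> q = lsmult c q"
  by (simp add: sm_pCons)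

lemma sm_1[simp]: "[:1:] \<odot> q = q"
  by (simp add: sm_const)

lemma sm_add_right: "p \<odot> (q1 + q2) = p \<odot> q1 + p \<odot> q2"
  by (induction p arbitrary: q1 q2) (simp_all add: sm_pCons lsmult_add X_add algebra_simps)

lemma sm_0_right[simp]: "p \<odot> 0 = 0"
  using sm_add_right[of p 0 0] by simp

lemma sm_lsmult: "lsmult c p \<odot> q = lsmult c (p \<odot> q)"
  by (induction p arbitrary: q) (simp_all add: sm_pCons lsmult_pCons lsmult_add lsmult_lsmult)

lemma sm_add_left: "(p1 + p2) \<odot> q = p1 \<odot> q + p2 \<odot> q"
proof (induction p1 arbitrary: p2 q)
  case 0 then show ?case by simp
next
  case (pCons a p)
  show ?case
  proof -
    obtain b p' where p2: "p2 = pCons b p'" by (cases p2)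
    show ?thesis using pCons.IH[of p' "X q"] by (simp add: p2 sm_pCons lsmult_add2 algebra_simps)
  qed
qed

lemma sm_neg_left: "(- p) \<odot> q = - (p \<odot> q)"
  using sm_add_left[of p "-p" q] by (simp add: add.inverse_unique)
lemma sm_diff_left: "(p1 - p2) \<odot> q = p1 \<odot> q - p2 \<odot> q"
  using sm_add_left[of p1 "-p2" q] by (simp add: sm_neg_left)
lemma sm_sum_left: "(\<Sum>j\<in>J. f j) \<odot> q = (\<Sum>j\<in>J. f j \<odot> q)"
  by (induction J rule: infinite_finite_induct) (simp_all add: sm_add_left)

lemma X_sm: "X p \<odot> r = X (p \<odot> r)"
proof (induction p arbitrary: r)
  case 0 then show ?case by simp
next
  case (pCons b q)
  show ?case
    by (simp add: X_pCons sm_pCons sm_add_left sm_const pCons.IH X_add X_lsmult algebra_simps)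
qed

lemma sm_assoc: "(p \<odot> q) \<odot> r = p \<odot> (q \<odot> r)"
  by (induction p arbitrary: q) (simp_all add: sm_pCons sm_add_left sm_lsmult X_sm)

end



lemma degree_eqI: "coeff p d \<noteq> 0 \<Longrightarrow> (\<forall>k>d. coeff p k = 0) \<Longrightarrow> degree p = d"
  by (simp add: degree_le le_antisym le_degree)

context skew begin

lemma degree_lsmult: "c \<noteq> 0 \<Longrightarrow> degree (lsmult c p) = degree p"
proof (cases "p = 0")
  case False
  assume c: "c \<noteq> 0"
  show ?thesis
    by (rule degree_eqI) (use c False in \<open>auto simp: coeff_eq_0\<close>)
qed simp

lemma lc_lsmult: "lead_coeff (lsmult c p) = c * lead_coeff p"
  by (cases "c = 0") (simp_all add: degree_lsmult)

lemma degree_X: assumes "w \<noteq> 0"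
  shows "degree (X w) = Suc (degree w) \<and> lead_coeff (X w) = \<sigma> (lead_coeff w)"
proof -
  have c: "coeff (X w) (Suc (degree w)) = \<sigma> (lead_coeff w)"
    by (simp add: coeff_X coeff_eq_0)
  have "degree (X w) = Suc (degree w)"
    by (rule degree_eqI) (use assms c in \<open>auto simp: coeff_X coeff_eq_0 s_nz\<close>)
  with c show ?thesis by simp
qed

lemma degree_sm:
  assumes "p \<noteq> 0" "q \<noteq> 0"
  shows "degree (p \<odot> q) = degree p + degree q \<and>
         lead_coeff (p \<odot> q) = lead_coeff p * (\<sigma>^^degree p) (lead_coeff q)"
  using assms
proof (induction p arbitrary: q)
  case 0 then show ?case by simp
next
  case (pCons a p)
  show ?case
  proof (cases "p = 0")
    case True
    then have a: "a \<noteq> 0" using pCons by simp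
    show ?thesis using True a by (simp add: sm_pCons degree_lsmult lc_lsmult)
  next
    case False
    have Xq: "X q \<noteq> 0" "degree (X q) = Suc (degree q)" "lead_coeff (X q) = \<sigma> (lead_coeff q)"
      using degree_X[OF \<open>q \<noteq> 0\<close>] by auto
    have IH: "degree (p \<odot> X q) = degree p + Suc (degree q)"
      "lead_coeff (p \<odot> X q) = lead_coeff p * (\<sigma>^^degree p) (\<sigma> (lead_coeff q))"
      using pCons.IH[OF False Xq(1)] Xq by auto
    have dl: "degree (lsmult a q) < degree (p \<odot> X q)"
      using IH by (cases "a = 0") (simp_all add: degree_lsmult)
    have deg: "degree (lsmult a q + p \<odot> X q) = degree (p \<odot> X q)"
      by (rule degree_add_eq_right[OF dl])
    have "coeff (lsmult a q) (degree (p \<odot> X q)) = 0"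
      using dl by (simp add: coeff_eq_0 del: coeff_lsmult)
    then show ?thesis using deg IH False
      by (simp add: sm_pCons funpow_Suc_right del: funpow.simps)
  qed
qed

lemma sm_nz: "p \<noteq> 0 \<Longrightarrow> q \<noteq> 0 \<Longrightarrow> p \<odot> q \<noteq> 0"
proof -
  assume a: "p \<noteq> 0" "q \<noteq> 0"
  have "lead_coeff p \<noteq> 0" "lead_coeff q \<noteq> 0" using a by auto
  then have "lead_coeff p * (\<sigma>^^degree p) (lead_coeff q) \<noteq> 0" using spow_nz by simp
  then have "lead_coeff (p \<odot> q) \<noteq> 0" using degree_sm[OF a] by metis
  then show ?thesis by auto
qed

lemma degree_sm_monic:
  assumes "p \<noteq> 0" "lead_coeff g = 1"
  shows "degree (p \<odot> g) = degree p + degree g \<and> lead_coeff (p \<odot> g) = lead_coeff p"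
proof -
  have "g \<noteq> 0" using assms by auto
  then have "degree (p \<odot> g) = degree p + degree g \<and> lead_coeff (p \<odot> g) = lead_coeff p * (\<sigma>^^degree p) (lead_coeff g)"
    using degree_sm[OF assms(1)] by blast
  then show ?thesis using assms(2) spow_one by (metis mult_1_right)
qed

lemma monom_sm: "monom c k \<odot> g = lsmult c ((X^^k) g)"
proof -
  have "monom c k \<odot> g = (\<Sum>i\<le>k. lsmult (coeff (monom c k) i) ((X^^i) g))"
    by (rule sm_def2) (simp add: degree_monom_le)
  also have "\<dots> = (\<Sum>i\<in>{k}. lsmult (coeff (monom c k) i) ((X^^i) g))"
    by (intro sum.mono_neutral_right) auto
  finally show ?thesis by simp
qed

definition inR :: "'a poly \<Rightarrow> 'a poly \<Rightarrow> bool" where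
  "inR g h \<longleftrightarrow> (\<exists>q. h = q \<odot> g)"

definition small :: "'a poly \<Rightarrow> 'a poly \<Rightarrow> bool" where
  "small g r \<longleftrightarrow> (\<forall>k\<ge>degree g. coeff r k = 0)"

lemma inR_0[simp]: "inR g 0" unfolding inR_def by (rule exI[of _ 0]) simp
lemma inR_add: "inR g a \<Longrightarrow> inR g b \<Longrightarrow> inR g (a + b)"
  unfolding inR_def by (metis sm_add_left)
lemma inR_neg: "inR g a \<Longrightarrow> inR g (- a)"
  unfolding inR_def by (metis sm_neg_left)
lemma inR_diff: "inR g a \<Longrightarrow> inR g b \<Longrightarrow> inR g (a - b)"
  unfolding inR_def by (metis sm_diff_left)
lemma inR_lsmult: "inR g a \<Longrightarrow> inR g (lsmult c a)"
  unfolding inR_def by (metis sm_lsmult)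
lemma inR_mult: "inR g a \<Longrightarrow> inR g (h \<odot> a)"
  unfolding inR_def by (metis sm_assoc)
lemma inR_trans: "inR g a \<Longrightarrow> inR a b \<Longrightarrow> inR g b"
  unfolding inR_def by (metis sm_assoc)
lemma inR_self: "inR g g" unfolding inR_def by (rule exI[of _ "[:1:]"]) simp
lemma inR_sum: "(\<And>j. j \<in> J \<Longrightarrow> inR g (f j)) \<Longrightarrow> inR g (\<Sum>j\<in>J. f j)"
  by (induction J rule: infinite_finite_induct) (auto intro: inR_add)

lemma small_add: "small g a \<Longrightarrow> small g b \<Longrightarrow> small g (a + b)" by (simp add: small_def)
lemma small_lsmult: "small g a \<Longrightarrow> small g (lsmult c a)" by (simp add: small_def)
lemma small_0[simp]: "small g 0" by (simp add: small_def)

lemma small_inR_0: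
  assumes "lead_coeff g = 1" "small g r" "inR g r" shows "r = 0"
proof -
  obtain q where q: "r = q \<odot> g" using assms(3) inR_def by auto
  show ?thesis
  proof (cases "q = 0")
    case False
    then have "degree r = degree q + degree g" "lead_coeff r = lead_coeff q"
      using degree_sm_monic[OF False assms(1)] q by auto
    moreover have "lead_coeff q \<noteq> 0" using False by simp
    ultimately show ?thesis using assms(2) unfolding small_def by auto
  qed (simp add: q)
qed

lemma division:
  assumes g: "lead_coeff g = 1"
  shows "\<exists>r. small g r \<and> inR g (h - r)"
proof (induction "degree h" arbitrary: h rule: less_induct)
  case less
  show ?case
  proof (cases "small g h")
    case True then show ?thesis by (intro exI[of _ h]) simp
  next
    case False
    then obtain k where k: "k \<ge> degree g" "coeff h k \<noteq> 0" unfolding small_def by auto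
    then have hz: "h \<noteq> 0" and dh: "degree h \<ge> degree g" using le_degree[of h k] by auto
    define t where "t = degree h - degree g"
    define m where "m = monom (lead_coeff h) t"
    have mz: "m \<noteq> 0" using hz by (simp add: m_def)
    have dm: "degree m = t" by (simp add: m_def degree_monom_eq hz)
    have mg: "degree (m \<odot> g) = degree h" "lead_coeff (m \<odot> g) = lead_coeff h"
      using degree_sm_monic[OF mz g] dm dh by (auto simp: t_def m_def)
    define h' where "h' = h - m \<odot> g"
    have inRm: "inR g (m \<odot> g)" unfolding inR_def by blast
    show ?thesis
    proof (cases "h' = 0")
      case True
      then show ?thesis using inRm by (intro exI[of _ 0]) (simp add: h'_def)
    next
      case False
      have "degree h' < degree h"
      proof (rule degree_lessI)
        show "h' \<noteq> 0 \<or> 0 < degree h" using False by simp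
        show "\<forall>k\<ge>degree h. coeff h' k = 0"
        proof (intro allI impI)
          fix k assume "degree h \<le> k"
          then show "coeff h' k = 0" using mg
            by (cases "k = degree h") (auto simp: h'_def coeff_eq_0)
        qed
      qed
      then obtain r where r: "small g r" "inR g (h' - r)" using less by blast
      have "h - r = (h' - r) + m \<odot> g" by (simp add: h'_def)
      then show ?thesis using r inRm inR_add by metis
    qed
  qed
qed

definition rem :: "'a poly \<Rightarrow> 'a poly \<Rightarrow> 'a poly" where
  "rem g h = (SOME r. small g r \<and> inR g (h - r))"

lemma rem: assumes "lead_coeff g = 1" shows "small g (rem g h)" "inR g (h - rem g h)"
  using someI_ex[OF division[OF assms, of h]] unfolding rem_def by auto

lemma rem_unique:
  assumes g: "lead_coeff g = 1" and "small g r" "inR g (h - r)" shows "rem g h = r"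
proof -
  have "small g (rem g h - r)" using rem[OF g, of h] assms(2) by (simp add: small_def)
  moreover have "inR g (rem g h - r)"
  proof -
    have "rem g h - r = (h - r) - (h - rem g h)" by simp
    then show ?thesis using inR_diff assms(3) rem(2)[OF g] by metis
  qed
  ultimately have "rem g h - r = 0" using small_inR_0[OF g] by blast
  then show ?thesis by simp
qed

lemma rem_add: assumes g: "lead_coeff g = 1" shows "rem g (a + b) = rem g a + rem g b"
proof (rule rem_unique[OF g])
  show "small g (rem g a + rem g b)" using rem[OF g] small_add by blast
  have "a + b - (rem g a + rem g b) = (a - rem g a) + (b - rem g b)" by simp
  then show "inR g (a + b - (rem g a + rem g b))" using rem(2)[OF g] inR_add by metis
qed

lemma rem_lsmult: assumes g: "lead_coeff g = 1" shows "rem g (lsmult c a) = lsmult c (rem g a)"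
proof (rule rem_unique[OF g])
  show "small g (lsmult c (rem g a))" using rem[OF g] small_lsmult by blast
  have "lsmult c a - lsmult c (rem g a) = lsmult c (a - rem g a)" by (simp add: poly_eq_iff algebra_simps)
  then show "inR g (lsmult c a - lsmult c (rem g a))" using rem(2)[OF g] inR_lsmult by metis
qed

lemma rem_0: assumes g: "lead_coeff g = 1" shows "rem g 0 = 0"
  by (rule rem_unique[OF g]) auto

lemma rem_sum: assumes g: "lead_coeff g = 1"
  shows "rem g (\<Sum>j\<in>J. lsmult (c j) (p j)) = (\<Sum>j\<in>J. lsmult (c j) (rem g (p j)))"
  by (induction J rule: infinite_finite_induct) (simp_all add: rem_0[OF g] rem_add[OF g] rem_lsmult[OF g])

lemma rem_eq_0_iff: assumes g: "lead_coeff g = 1" shows "rem g h = 0 \<longleftrightarrow> inR g h"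
  using rem[OF g, of h] rem_unique[OF g, of 0 h] by auto

lemma rem_inR: assumes g: "lead_coeff g = 1" and "inR g (a - b)" shows "rem g a = rem g b"
proof -
  have "rem g a = rem g (a - b) + rem g b" using rem_add[OF g, of "a - b" b] by simp
  then show ?thesis using assms rem_eq_0_iff[OF g] by simp
qed

end



lemma lin_dep:
  fixes u :: "'j \<Rightarrow> 'k \<Rightarrow> 'a::division_ring"
  assumes "finite K" "finite J" "card K < card J" "\<forall>j\<in>J. \<forall>k. k \<notin> K \<longrightarrow> u j k = 0"
  shows "\<exists>c. (\<exists>j\<in>J. c j \<noteq> 0) \<and> (\<forall>k. (\<Sum>j\<in>J. c j * u j k) = 0)"
  using assms
proof (induction K arbitrary: J u rule: finite_induct)
  case empty
  then have "J \<noteq> {}" by auto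
  then show ?case using empty by (intro exI[of _ "\<lambda>_. 1"]) auto
next
  case (insert b K)
  show ?case
  proof (cases "\<forall>j\<in>J. u j b = 0")
    case True
    have "\<forall>j\<in>J. \<forall>k. k \<notin> K \<longrightarrow> u j k = 0" using True insert.prems by (metis insertE)
    moreover have "card K < card J" using insert by simp
    ultimately show ?thesis using insert.IH insert.prems(1) by blast
  next
    case False
    then obtain j0 where j0: "j0 \<in> J" "u j0 b \<noteq> 0" by auto
    define J' where "J' = J - {j0}"
    define t where "t j = u j b * inverse (u j0 b)" for j
    define w where "w j k = u j k - t j * u j0 k" for j k
    have cJ': "card K < card J'" using insert j0 by (simp add: J'_def)
    have "\<forall>j\<in>J'. \<forall>k. k \<notin> K \<longrightarrow> w j k = 0"
    proof (intro ballI allI impI)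
      fix j k assume j: "j \<in> J'" and k: "k \<notin> K"
      show "w j k = 0"
      proof (cases "k = b")
        case True then show ?thesis using j0 by (simp add: w_def t_def mult.assoc)
      next
        case False then show ?thesis using k j j0 insert.prems by (simp add: w_def J'_def)
      qed
    qed
    moreover have "finite J'" using insert.prems(1) by (simp add: J'_def)
    ultimately obtain c' where c': "\<exists>j\<in>J'. c' j \<noteq> 0" "\<forall>k. (\<Sum>j\<in>J'. c' j * w j k) = 0"
      using insert.IH[OF _ cJ'] by blast
    define c where "c = c'(j0 := - (\<Sum>j\<in>J'. c' j * t j))"
    have "\<exists>j\<in>J. c j \<noteq> 0" using c'(1) by (auto simp: c_def J'_def)
    moreover have "\<forall>k. (\<Sum>j\<in>J. c j * u j k) = 0"
    proof
      fix k
      have s: "(\<Sum>j\<in>J. c j * u j k) = c j0 * u j0 k + (\<Sum>j\<in>J'. c j * u j k)"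
        using j0 insert.prems(1) by (simp add: J'_def sum.remove)
      have s2: "(\<Sum>j\<in>J'. c j * u j k) = (\<Sum>j\<in>J'. c' j * u j k)"
        by (intro sum.cong) (auto simp: c_def J'_def)
      have "0 = (\<Sum>j\<in>J'. c' j * w j k)" using c'(2) by simp
      also have "\<dots> = (\<Sum>j\<in>J'. c' j * u j k) - (\<Sum>j\<in>J'. c' j * t j) * u j0 k"
        by (simp add: w_def right_diff_distrib sum_subtractf sum_distrib_right mult.assoc)
      finally show "(\<Sum>j\<in>J. c j * u j k) = 0" using s s2 by (simp add: c_def)
    qed
    ultimately show ?thesis by blast
  qed
qed




context skew begin

abbreviation I where "I \<equiv> skew_I \<sigma> \<delta>"
abbreviation FF where "FF \<equiv> skew_F \<sigma> \<delta>"

lemma I_iff: "G \<in> I \<Omega> \<longleftrightarrow> (\<forall>P\<in>\<Omega>. inR P G)"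
  by (simp add: skew_I_def inR_def)

lemma F_props:
  assumes "I \<Omega> \<noteq> {0}"
  shows "FF \<Omega> \<in> I \<Omega> \<and> lead_coeff (FF \<Omega>) = 1 \<and> (\<forall>G\<in>I \<Omega>. G \<noteq> 0 \<longrightarrow> degree (FF \<Omega>) \<le> degree G)"
proof -
  have "0 \<in> I \<Omega>" by (simp add: I_iff)
  then obtain G1 where G1: "G1 \<in> I \<Omega>" "G1 \<noteq> 0" using assms by blast
  define d where "d = (LEAST d. \<exists>G\<in>I \<Omega>. G \<noteq> 0 \<and> degree G = d)"
  have "\<exists>G\<in>I \<Omega>. G \<noteq> 0 \<and> degree G = d" unfolding d_def
    by (rule LeastI[of _ "degree G1"]) (use G1 in blast)
  then obtain G0 where G0: "G0 \<in> I \<Omega>" "G0 \<noteq> 0" "degree G0 = d" by blast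
  have dmin: "\<And>G. G \<in> I \<Omega> \<Longrightarrow> G \<noteq> 0 \<Longrightarrow> d \<le> degree G"
    unfolding d_def by (rule Least_le) blast
  define F0 where "F0 = lsmult (inverse (lead_coeff G0)) G0"
  have lc0: "lead_coeff G0 \<noteq> 0" using G0 by (metis leading_coeff_0_iff)
  have F0: "F0 \<in> I \<Omega>" "lead_coeff F0 = 1" "degree F0 = d"
    using G0 lc0 by (auto simp: F0_def I_iff inR_lsmult degree_lsmult lc_lsmult)
  let ?Q = "\<lambda>F. F \<in> I \<Omega> \<and> lead_coeff F = 1 \<and> (\<forall>G\<in>I \<Omega>. G \<noteq> 0 \<longrightarrow> degree F \<le> degree G)"
  have "?Q F0" using F0 dmin by auto
  moreover have "F = F0" if "?Q F" for F
  proof (rule ccontr)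
    assume ne: "F \<noteq> F0"
    have Fz: "F \<noteq> 0" using that by auto
    have dF: "degree F = d" using that F0 dmin[of F] Fz
      by (metis le_antisym one_neq_zero leading_coeff_0_iff)
    have "F - F0 \<in> I \<Omega>" using that F0 by (auto simp: I_iff intro: inR_diff)
    moreover have "F - F0 \<noteq> 0" using ne by simp
    moreover have "degree (F - F0) < d"
    proof (rule degree_lessI)
      show "F - F0 \<noteq> 0 \<or> 0 < d" using ne by simp
      show "\<forall>k\<ge>d. coeff (F - F0) k = 0"
      proof (intro allI impI)
        fix k assume "d \<le> k"
        then show "coeff (F - F0) k = 0" using dF F0 that
          by (cases "k = d") (auto simp: coeff_eq_0)
      qed
    qed
    ultimately show False using dmin by fastforce
  qed
  ultimately have "?Q (THE F. ?Q F)" by (rule theI)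
  then show ?thesis using assms by (simp add: skew_F_def)
qed

definition phi :: "'a poly set \<Rightarrow> 'a poly \<Rightarrow> 'a poly \<times> nat \<Rightarrow> 'a" where
  "phi \<Omega> h = (\<lambda>(P, k). if P \<in> \<Omega> then coeff (rem P h) k else 0)"

definition KK :: "'a poly set \<Rightarrow> ('a poly \<times> nat) set" where
  "KK \<Omega> = Sigma \<Omega> (\<lambda>P. {..<degree P})"

definition CRT :: "'a poly set \<Rightarrow> bool" where
  "CRT \<Omega> \<longleftrightarrow> (\<forall>t. (\<forall>P\<in>\<Omega>. small P (t P)) \<longrightarrow> (\<exists>h. \<forall>P\<in>\<Omega>. inR P (h - t P)))"

lemma card_KK: "finite \<Omega> \<Longrightarrow> card (KK \<Omega>) = (\<Sum>P\<in>\<Omega>. degree P)"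
  by (simp add: KK_def)

lemma finite_KK: "finite \<Omega> \<Longrightarrow> finite (KK \<Omega>)"
  by (simp add: KK_def)

lemma phi_supp:
  assumes "\<forall>P\<in>\<Omega>. lead_coeff P = 1" "\<kappa> \<notin> KK \<Omega>" shows "phi \<Omega> h \<kappa> = 0"
proof -
  obtain P k where k: "\<kappa> = (P, k)" by (cases \<kappa>)
  show ?thesis
  proof (cases "P \<in> \<Omega>")
    case True
    then have "k \<ge> degree P" using assms k by (auto simp: KK_def)
    then show ?thesis using rem(1)[of P h] assms True k by (simp add: phi_def small_def)
  qed (simp add: phi_def k)
qed

lemma phi_sum:
  assumes "\<forall>P\<in>\<Omega>. lead_coeff P = 1"
  shows "phi \<Omega> (\<Sum>j\<in>J. lsmult (c j) (p j)) \<kappa> = (\<Sum>j\<in>J. c j * phi \<Omega> (p j) \<kappa>)"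
proof -
  obtain P k where k: "\<kappa> = (P, k)" by (cases \<kappa>)
  show ?thesis
    using assms by (cases "P \<in> \<Omega>") (simp_all add: phi_def k rem_sum coeff_sum)
qed

lemma phi_zero_inR:
  assumes "\<forall>P\<in>\<Omega>. lead_coeff P = 1" "\<forall>\<kappa>. phi \<Omega> h \<kappa> = 0" shows "h \<in> I \<Omega>"
proof -
  have "inR P h" if P: "P \<in> \<Omega>" for P
  proof -
    have "rem P h = 0" using assms(2)[rule_format, of "(P, _)"] P by (simp add: phi_def poly_eq_iff)
    then show ?thesis using rem_eq_0_iff assms(1) P by blast
  qed
  then show ?thesis by (simp add: I_iff)
qed

lemma indep:
  assumes mon: "\<forall>P\<in>\<Omega>. lead_coeff P = 1" and ne: "I \<Omega> \<noteq> {0}"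
    and c: "\<exists>j<degree (FF \<Omega>). c j \<noteq> 0"
  shows "\<exists>\<kappa>. (\<Sum>j<degree (FF \<Omega>). c j * phi \<Omega> (monom 1 j) \<kappa>) \<noteq> 0"
proof (rule ccontr)
  let ?m = "degree (FF \<Omega>)"
  assume "\<not> ?thesis"
  then have z: "\<forall>\<kappa>. (\<Sum>j<?m. c j * phi \<Omega> (monom 1 j) \<kappa>) = 0" by simp
  define g where "g = (\<Sum>j<?m. lsmult (c j) (monom 1 j))"
  have "\<forall>\<kappa>. phi \<Omega> g \<kappa> = 0" using z by (simp add: g_def phi_sum[OF mon])
  then have gI: "g \<in> I \<Omega>" using phi_zero_inR mon by blast
  have cg: "coeff g i = (if i < ?m then c i else 0)" for i
  proof -
    have "coeff g i = (\<Sum>j<?m. c j * (if j = i then 1 else 0))" by (simp add: g_def coeff_sum)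
    also have "\<dots> = (\<Sum>j<?m. if j = i then c j else 0)" by (intro sum.cong) auto
    finally show ?thesis by simp
  qed
  obtain j where j: "j < ?m" "c j \<noteq> 0" using c by blast
  have gz: "g \<noteq> 0" using cg[of j] j by auto
  have "degree g < ?m" by (rule degree_lessI) (use gz cg in auto)
  then show False using F_props[OF ne] gI gz by fastforce
qed

lemma deg_le:
  assumes fin: "finite \<Omega>" and mon: "\<forall>P\<in>\<Omega>. lead_coeff P = 1" and ne: "I \<Omega> \<noteq> {0}"
  shows "degree (FF \<Omega>) \<le> card (KK \<Omega>)"
proof (rule ccontr)
  let ?m = "degree (FF \<Omega>)"
  assume "\<not> ?thesis"
  then have lt: "card (KK \<Omega>) < card {..<?m}" by simp
  obtain c where c: "\<exists>j\<in>{..<?m}. c j \<noteq> 0" "\<forall>\<kappa>. (\<Sum>j\<in>{..<?m}. c j * phi \<Omega> (monom 1 j) \<kappa>) = 0"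
    using lin_dep[OF finite_KK[OF fin] _ lt, of "\<lambda>j. phi \<Omega> (monom 1 j)"] phi_supp[OF mon] by auto
  then show False using indep[OF mon ne, of c] by auto
qed

lemma eq_imp_CRT:
  assumes fin: "finite \<Omega>" and mon: "\<forall>P\<in>\<Omega>. lead_coeff P = 1" and ne: "I \<Omega> \<noteq> {0}"
    and eq: "degree (FF \<Omega>) = card (KK \<Omega>)"
  shows "CRT \<Omega>"
  unfolding CRT_def
proof (intro allI impI)
  fix t assume t: "\<forall>P\<in>\<Omega>. small P (t P)"
  let ?m = "degree (FF \<Omega>)"
  define \<tau> where "\<tau> = (\<lambda>(P, k). if P \<in> \<Omega> then coeff (t P) k else 0)"
  define u where "u j = (if j = ?m then \<tau> else phi \<Omega> (monom 1 j))" for j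
  have supp: "\<forall>j\<in>{..?m}. \<forall>\<kappa>. \<kappa> \<notin> KK \<Omega> \<longrightarrow> u j \<kappa> = 0"
  proof (intro ballI allI impI)
    fix j \<kappa> assume "\<kappa> \<notin> KK \<Omega>"
    moreover obtain P k where k: "\<kappa> = (P, k)" by (cases \<kappa>)
    ultimately show "u j \<kappa> = 0" using phi_supp[OF mon] t
      by (auto simp: u_def \<tau>_def KK_def small_def)
  qed
  have lt: "card (KK \<Omega>) < card {..?m}" using eq by simp
  obtain c where c: "\<exists>j\<in>{..?m}. c j \<noteq> 0" "\<forall>\<kappa>. (\<Sum>j\<in>{..?m}. c j * u j \<kappa>) = 0"
    using lin_dep[OF finite_KK[OF fin] _ lt supp] by auto
  have split: "(\<Sum>j\<in>{..?m}. c j * u j \<kappa>) = (\<Sum>j<?m. c j * phi \<Omega> (monom 1 j) \<kappa>) + c ?m * \<tau> \<kappa>" for \<kappa>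
    by (simp add: lessThan_Suc_atMost[symmetric] u_def)
  define g where "g = (\<Sum>j<?m. lsmult (c j) (monom 1 j))"
  have rel: "phi \<Omega> g \<kappa> = - (c ?m * \<tau> \<kappa>)" for \<kappa>
  proof -
    have "(\<Sum>j\<in>{..?m}. c j * u j \<kappa>) = 0" using c(2) by blast
    then have "(\<Sum>j<?m. c j * phi \<Omega> (monom 1 j) \<kappa>) + c ?m * \<tau> \<kappa> = 0" using split[of \<kappa>] by simp
    then show ?thesis by (simp add: g_def phi_sum[OF mon] eq_neg_iff_add_eq_0)
  qed
  show "\<exists>h. \<forall>P\<in>\<Omega>. inR P (h - t P)"
  proof (cases "c ?m = 0")
    case True
    then have "\<exists>j<?m. c j \<noteq> 0" using c(1) by (metis atMost_iff le_neq_implies_less)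
    then show ?thesis using indep[OF mon ne] c(2) split True by auto
  next
    case False
    define h where "h = lsmult (- inverse (c ?m)) g"
    have "rem P h = t P" if P: "P \<in> \<Omega>" for P
    proof -
      have "coeff (rem P h) k = coeff (t P) k" for k
      proof -
        have "coeff (rem P g) k = - (c ?m * coeff (t P) k)" using rel[of "(P, k)"] P by (simp add: phi_def \<tau>_def)
        then have "coeff (rem P h) k = inverse (c ?m) * c ?m * coeff (t P) k"
          using P mon by (simp add: h_def rem_lsmult mult.assoc)
        then show ?thesis using False by simp
      qed
      then show ?thesis by (simp add: poly_eq_iff)
    qed
    then show ?thesis using rem(2) mon by (intro exI[of _ h]) metis
  qed
qed

lemma CRT_imp_ge:
  assumes fin: "finite \<Omega>" and mon: "\<forall>P\<in>\<Omega>. lead_coeff P = 1" and ne: "I \<Omega> \<noteq> {0}"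
    and crt: "CRT \<Omega>"
  shows "card (KK \<Omega>) \<le> degree (FF \<Omega>)"
proof (rule ccontr)
  let ?m = "degree (FF \<Omega>)"
  let ?F = "FF \<Omega>"
  assume "\<not> ?thesis"
  then have lt: "card {..<?m} < card (KK \<Omega>)" by simp
  define tt where "tt \<kappa> P = (if P = fst \<kappa> then monom (1::'a) (snd \<kappa>) else 0)" for \<kappa> :: "'a poly \<times> nat" and P :: "'a poly"
  have "\<forall>\<kappa>\<in>KK \<Omega>. \<exists>h. \<forall>P\<in>\<Omega>. inR P (h - tt \<kappa> P)"
  proof
    fix \<kappa> assume k: "\<kappa> \<in> KK \<Omega>"
    have "\<forall>P\<in>\<Omega>. small P (tt \<kappa> P)" using k by (auto simp: tt_def small_def KK_def)
    then show "\<exists>h. \<forall>P\<in>\<Omega>. inR P (h - tt \<kappa> P)" using crt by (simp add: CRT_def)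
  qed
  then obtain hh where hh: "\<forall>\<kappa>\<in>KK \<Omega>. \<forall>P\<in>\<Omega>. inR P (hh \<kappa> - tt \<kappa> P)" by metis
  have Fp: "?F \<in> I \<Omega>" "lead_coeff ?F = 1" using F_props[OF ne] by auto
  define p where "p \<kappa> = rem ?F (hh \<kappa>)" for \<kappa>
  have supp: "\<forall>\<kappa>\<in>KK \<Omega>. \<forall>i. i \<notin> {..<?m} \<longrightarrow> coeff (p \<kappa>) i = 0"
    using rem(1)[OF Fp(2)] by (auto simp: p_def small_def)
  obtain c where c: "\<exists>\<kappa>\<in>KK \<Omega>. c \<kappa> \<noteq> 0" "\<forall>i. (\<Sum>\<kappa>\<in>KK \<Omega>. c \<kappa> * coeff (p \<kappa>) i) = 0"
    using lin_dep[OF _ finite_KK[OF fin] lt supp] by auto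
  have sum0: "(\<Sum>\<kappa>\<in>KK \<Omega>. lsmult (c \<kappa>) (p \<kappa>)) = 0"
    using c(2) by (simp add: poly_eq_iff coeff_sum)
  have remp: "rem P (p \<kappa>) = tt \<kappa> P" if "\<kappa> \<in> KK \<Omega>" "P \<in> \<Omega>" for \<kappa> P
  proof -
    have mP: "lead_coeff P = 1" using mon that by auto
    have "inR P ?F" using Fp(1) that(2) by (simp add: I_iff)
    then have "inR P (hh \<kappa> - p \<kappa>)" using rem(2)[OF Fp(2)] inR_trans by (metis p_def)
    then have "rem P (p \<kappa>) = rem P (hh \<kappa>)" using rem_inR[OF mP] inR_neg by (metis minus_diff_eq)
    also have "\<dots> = tt \<kappa> P"
    proof (rule rem_unique[OF mP])
      show "small P (tt \<kappa> P)" using that by (auto simp: tt_def small_def KK_def)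
      show "inR P (hh \<kappa> - tt \<kappa> P)" using hh that by blast
    qed
    finally show ?thesis .
  qed
  obtain \<kappa>0 where k0: "\<kappa>0 \<in> KK \<Omega>" "c \<kappa>0 \<noteq> 0" using c(1) by blast
  obtain P0 k0 where pk: "\<kappa>0 = (P0, k0)" by (cases \<kappa>0)
  have P0: "P0 \<in> \<Omega>" using k0 pk by (auto simp: KK_def)
  have "0 = coeff (rem P0 (\<Sum>\<kappa>\<in>KK \<Omega>. lsmult (c \<kappa>) (p \<kappa>))) k0"
    using sum0 rem_0 mon P0 by simp
  also have "\<dots> = (\<Sum>\<kappa>\<in>KK \<Omega>. c \<kappa> * coeff (tt \<kappa> P0) k0)"
    using mon P0 by (simp add: rem_sum coeff_sum remp)
  also have "\<dots> = (\<Sum>\<kappa>\<in>KK \<Omega>. if \<kappa> = \<kappa>0 then c \<kappa> else 0)"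
    by (intro sum.cong) (auto simp: tt_def pk prod_eq_iff)
  also have "\<dots> = c \<kappa>0" using k0 finite_KK[OF fin] by simp
  finally show False using k0 by simp
qed

end



context skew begin

abbreviation sp where "sp \<equiv> skew_pow \<sigma> \<delta>"

lemma sp_0: "sp p 0 = [:1:]" by (simp add: skew_pow_def)
lemma sp_Suc: "sp p (Suc n) = sp p n \<odot> p" by (simp add: skew_pow_def)
lemma sp_1: "sp p 1 = p" by (simp add: sp_Suc sp_0)

lemma sp_add: "sp p (t + Suc s) = sp p t \<odot> sp p (Suc s)"
proof (induction s)
  case 0 then show ?case by (simp add: sp_Suc sp_0)
next
  case (Suc s)
  have "sp p (t + Suc (Suc s)) = sp p (t + Suc s) \<odot> p" by (simp add: sp_Suc)
  also have "\<dots> = sp p t \<odot> sp p (Suc (Suc s))" using Suc by (simp add: sm_assoc sp_Suc[of p "Suc s"])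
  finally show ?case .
qed

lemma sp_monic:
  assumes "lead_coeff p = 1"
  shows "lead_coeff (sp p n) = 1 \<and> degree (sp p n) = n * degree p"
proof (induction n)
  case 0 then show ?case by (simp add: sp_0)
next
  case (Suc n)
  have "sp p n \<noteq> 0" using Suc by auto
  then have "degree (sp p n \<odot> p) = degree (sp p n) + degree p \<and> lead_coeff (sp p n \<odot> p) = lead_coeff (sp p n)"
    using degree_sm_monic[OF _ assms, of "sp p n"] by blast
  then show ?case using Suc unfolding sp_Suc by (metis add.commute mult_Suc)
qed

lemma lin_monic: "lead_coeff (sp [:- b, 1:] n) = 1" "degree (sp [:- b, 1:] n) = n"
  using sp_monic[of "[:- b, 1:]" n] by auto

lemma sp_dvd: assumes "1 \<le> s" "s \<le> r" shows "inR (sp p s) (sp p r)"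
proof -
  obtain s' where s': "s = Suc s'" using assms by (cases s) auto
  have "r = (r - s) + Suc s'" using assms s' by simp
  then have "sp p r = sp p (r - s) \<odot> sp p s" using sp_add[of p "r - s" s'] s' by metis
  then show ?thesis by (auto simp: inR_def)
qed

lemma P_indep_iff:
  assumes fin: "finite \<Omega>" and mon: "\<forall>P\<in>\<Omega>. lead_coeff P = 1" and ne: "I \<Omega> \<noteq> {0}"
  shows "P_independent \<sigma> \<delta> \<Omega> \<longleftrightarrow> CRT \<Omega>"
  using eq_imp_CRT[OF assms] CRT_imp_ge[OF assms] deg_le[OF assms] card_KK[OF fin] fin ne
  by (auto simp: P_independent_def)

lemma main:
  fixes a :: "nat \<Rightarrow> 'a" and r :: "nat \<Rightarrow> nat"
  assumes r1: "\<forall>i<n. 1 \<le> r i"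
    and card: "card ((\<lambda>i. sp [:- a i, 1:] (r i)) ` {..<n}) = n"
    and ind: "P_independent \<sigma> \<delta> ((\<lambda>i. sp [:- a i, 1:] (r i)) ` {..<n})"
  shows "(\<forall>s :: nat \<Rightarrow> nat. (\<forall>i<n. 1 \<le> s i \<and> s i \<le> r i) \<longrightarrow>
               P_independent \<sigma> \<delta> ((\<lambda>i. sp [:- a i, 1:] (s i)) ` {..<n}))"
    "card (a ` {..<n}) = n"
proof -
  define P where "P i = sp [:- a i, 1:] (r i)" for i
  define \<Omega> where "\<Omega> = P ` {..<n}"
  have inj: "inj_on P {..<n}" using card by (intro eq_card_imp_inj_on) (simp_all add: P_def)
  have fin: "finite \<Omega>" by (simp add: \<Omega>_def)
  have mon: "\<forall>P\<in>\<Omega>. lead_coeff P = 1" unfolding \<Omega>_def P_def using lin_monic(1) by blast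
  have ne: "I \<Omega> \<noteq> {0}" using ind by (simp add: P_independent_def \<Omega>_def P_def)
  have crt: "CRT \<Omega>" using ind P_indep_iff[OF fin mon ne] by (simp add: \<Omega>_def P_def)
  show "\<forall>s :: nat \<Rightarrow> nat. (\<forall>i<n. 1 \<le> s i \<and> s i \<le> r i) \<longrightarrow>
               P_independent \<sigma> \<delta> ((\<lambda>i. sp [:- a i, 1:] (s i)) ` {..<n})"
  proof (intro allI impI)
    fix s :: "nat \<Rightarrow> nat" assume s: "\<forall>i<n. 1 \<le> s i \<and> s i \<le> r i"
    define Q where "Q i = sp [:- a i, 1:] (s i)" for i
    define \<Omega>' where "\<Omega>' = Q ` {..<n}"
    have QP: "inR (Q i) (P i)" if "i < n" for i using s that unfolding Q_def P_def by (intro sp_dvd) auto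
    have fin': "finite \<Omega>'" by (simp add: \<Omega>'_def)
    have mon': "\<forall>P\<in>\<Omega>'. lead_coeff P = 1" unfolding \<Omega>'_def Q_def using lin_monic(1) by blast
    have sub: "I \<Omega> \<subseteq> I \<Omega>'"
    proof
      fix G assume "G \<in> I \<Omega>"
      then have "inR (P i) G" if "i < n" for i using that by (auto simp: I_iff \<Omega>_def)
      then show "G \<in> I \<Omega>'" using QP inR_trans unfolding I_iff \<Omega>'_def by blast
    qed
    have "0 \<in> I \<Omega>" by (simp add: I_iff)
    then have ne': "I \<Omega>' \<noteq> {0}" using ne sub by blast
    have crt': "CRT \<Omega>'" unfolding CRT_def
    proof (intro allI impI)
      fix t assume t: "\<forall>Q\<in>\<Omega>'. small Q (t Q)"
      define idx where "idx = the_inv_into {..<n} P"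
      have idx: "idx (P i) = i" if "i < n" for i using inj that by (simp add: idx_def the_inv_into_f_f)
      define t' where "t' p = t (Q (idx p))" for p
      have "\<forall>p\<in>\<Omega>. small p (t' p)"
      proof
        fix p assume "p \<in> \<Omega>"
        then obtain i where i: "i < n" "p = P i" by (auto simp: \<Omega>_def)
        have "small (Q i) (t (Q i))" using t i by (auto simp: \<Omega>'_def)
        moreover have "degree (Q i) \<le> degree (P i)" using s i by (simp add: Q_def P_def lin_monic)
        ultimately show "small p (t' p)" using i idx by (simp add: t'_def small_def)
      qed
      then obtain h where h: "\<forall>p\<in>\<Omega>. inR p (h - t' p)" using crt by (auto simp: CRT_def)
      have "\<forall>q\<in>\<Omega>'. inR q (h - t q)"
      proof
        fix q assume "q \<in> \<Omega>'"
        then obtain i where i: "i < n" "q = Q i" by (auto simp: \<Omega>'_def)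
        have "inR (P i) (h - t' (P i))" using h i by (auto simp: \<Omega>_def)
        then have "inR (P i) (h - t q)" using i idx by (simp add: t'_def)
        then show "inR q (h - t q)" using QP i inR_trans by blast
      qed
      then show "\<exists>h. \<forall>q\<in>\<Omega>'. inR q (h - t q)" by blast
    qed
    show "P_independent \<sigma> \<delta> ((\<lambda>i. sp [:- a i, 1:] (s i)) ` {..<n})"
      using P_indep_iff[OF fin' mon' ne'] crt' by (simp add: \<Omega>'_def Q_def)
  qed
  have noteq: False if ij: "i < n" "j < n" "i \<noteq> j" "a i = a j" "r i \<le> r j" for i j
  proof -
    have PiPj: "P i \<noteq> P j" using inj ij by (meson inj_on_contraD lessThan_iff)
    have dvd: "inR (P i) (P j)" using ij r1 sp_dvd[of "r i" "r j" "[:- a j, 1:]"] unfolding P_def by simp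
    define t where "t p = (if p = P j then [:1::'a:] else 0)" for p
    have "\<forall>p\<in>\<Omega>. small p (t p)"
    proof
      fix p assume "p \<in> \<Omega>"
      show "small p (t p)"
      proof (cases "p = P j")
        case True
        then have "degree p \<ge> 1" using r1 ij by (simp add: P_def lin_monic)
        then show ?thesis using True by (auto simp: t_def small_def coeff_pCons split: nat.splits)
      qed (simp add: t_def)
    qed
    then obtain h where h: "\<forall>p\<in>\<Omega>. inR p (h - t p)" using crt by (auto simp: CRT_def)
    have "P i \<in> \<Omega>" "P j \<in> \<Omega>" using ij by (auto simp: \<Omega>_def)
    then have hi: "inR (P i) (h - t (P i))" and hj: "inR (P j) (h - t (P j))" using h by auto
    have "inR (P i) h" using hi PiPj by (simp add: t_def)
    moreover have "inR (P j) (h - [:1:])" using hj by (simp add: t_def)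
    then have "inR (P i) (h - [:1:])" using dvd inR_trans by blast
    ultimately have "inR (P i) (h - (h - [:1:]))" by (rule inR_diff)
    then have "inR (P i) [:1:]" by simp
    moreover have "small (P i) [:1:]" using r1 ij
      by (auto simp: P_def lin_monic small_def coeff_pCons split: nat.splits)
    moreover have "lead_coeff (P i) = 1" unfolding P_def by (rule lin_monic(1))
    ultimately show False using small_inR_0 by fastforce
  qed
  have "inj_on a {..<n}"
  proof (rule inj_onI)
    fix i j assume "i \<in> {..<n}" "j \<in> {..<n}" "a i = a j"
    then show "i = j" using noteq[of i j] noteq[of j i] by (metis lessThan_iff nat_le_linear)
  qed
  then show "card (a ` {..<n}) = n" by (simp add: card_image)
qed

end

theorem mainTheorem5:
  fixes \<sigma> \<delta> :: "'a::division_ring \<Rightarrow> 'a"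
    and a :: "nat \<Rightarrow> 'a" and r :: "nat \<Rightarrow> nat" and n :: nat
  assumes "ring_endo \<sigma>" and "sigma_derivation \<sigma> \<delta>"
    and "\<forall>i<n. 1 \<le> r i"
    and "card ((\<lambda>i. skew_pow \<sigma> \<delta> [:- a i, 1:] (r i)) ` {..<n}) = n"
  shows "(P_independent \<sigma> \<delta> ((\<lambda>i. skew_pow \<sigma> \<delta> [:- a i, 1:] (r i)) ` {..<n}) \<longrightarrow>
            (\<forall>s :: nat \<Rightarrow> nat. (\<forall>i<n. 1 \<le> s i \<and> s i \<le> r i) \<longrightarrow>
               P_independent \<sigma> \<delta> ((\<lambda>i. skew_pow \<sigma> \<delta> [:- a i, 1:] (s i)) ` {..<n})))
       \<and> (P_independent \<sigma> \<delta> ((\<lambda>i. skew_pow \<sigma> \<delta> [:- a i, 1:] (r i)) ` {..<n}) \<longrightarrow>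
            card (a ` {..<n}) = n \<and> P_independent_elems \<sigma> \<delta> (a ` {..<n}))"
proof -
  interpret skew \<sigma> \<delta> using assms(1,2) by (rule skew.intro)
  show ?thesis
  proof (intro conjI impI)
    assume ind: "P_independent \<sigma> \<delta> ((\<lambda>i. skew_pow \<sigma> \<delta> [:- a i, 1:] (r i)) ` {..<n})"
    note m = main[OF assms(3,4) ind]
    show "\<forall>s :: nat \<Rightarrow> nat. (\<forall>i<n. 1 \<le> s i \<and> s i \<le> r i) \<longrightarrow>
               P_independent \<sigma> \<delta> ((\<lambda>i. skew_pow \<sigma> \<delta> [:- a i, 1:] (s i)) ` {..<n})" by (rule m(1))
    show "card (a ` {..<n}) = n" by (rule m(2))
    have "P_independent \<sigma> \<delta> ((\<lambda>i. skew_pow \<sigma> \<delta> [:- a i, 1:] ((\<lambda>_. 1) i)) ` {..<n})"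
      using m(1)[rule_format, of "\<lambda>_. 1"] assms(3) by simp
    moreover have "(\<lambda>i. skew_pow \<sigma> \<delta> [:- a i, 1:] ((\<lambda>_. 1::nat) i)) ` {..<n} = (\<lambda>b. [:- b, 1:]) ` a ` {..<n}"
      by (simp only: sp_1 image_image)
    ultimately show "P_independent_elems \<sigma> \<delta> (a ` {..<n})"
      by (simp add: P_independent_elems_def)
  qed
qed


end
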